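(* Let $q_1,q_2$ be integers with $1\le q_1\le q_2$, $A=\begin{pmatrix}3q_1&0\\0&3q_2\end{pmatrix}$, $\mathcal{D}=\left\{\begin{pmatrix}0\\0\end{pmatrix},\begin{pmatrix}1\\0\end{pmatrix},\begin{pmatrix}0\\1\end{pmatrix}\right\}$, and $\mu_{A,\mathcal{D}}$ the associated Sierpiński-type measure. If $\Lambda$ is an orthogonal set of $\mu_{A,\mathcal{D}}$, then $\Lambda$ has at most one point on every horizontal line and at most one point on every vertical line; i.e., any two distinct points of $\Lambda$ differ in both coordinates.
   Context: $\mu_{A,\mathcal{D}}$ is the unique Borel probability measure on $\mathbb{R}^2$ with $\mu_{A,\mathcal{D}}(E)=\frac13\sum_{d\in\mathcal{D}}\mu_{A,\mathcal{D}}(AE-d)$ for Borel $E$. A countable $\Lambda\subseteq\mathbb{R}^2$ is an orthogonal set of $\mu$ if $\{e^{-2\pi i\langle\lambda,x\rangle}:\lambda\in\Lambda\}$ is orthogonal in $L^2(\mu)$. *)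

theory Defs
  imports "HOL-Probability.Probability"
begin

text \<open>The affine map x \<mapsto> A x - d, so that (\<lambda>x. A x - d) ` E = A E - d.\<close>
definition affine_shift :: "(real \<times> real \<Rightarrow> real \<times> real) \<Rightarrow> real \<times> real \<Rightarrow> real \<times> real \<Rightarrow> real \<times> real"
  where "affine_shift A d x = A x - d"

definition is_self_affine_measure ::
  "(real \<times> real \<Rightarrow> real \<times> real) \<Rightarrow> (real \<times> real) set \<Rightarrow> (real \<times> real) measure \<Rightarrow> bool"
  where "is_self_affine_measure A D M \<longleftrightarrow>
     prob_space M \<and> sets M = sets borel \<and>
     (\<forall>E \<in> sets borel. measure M E =
         (1 / real (card D)) * (\<Sum>d\<in>D. measure M (affine_shift A d ` E)))"

definition self_affine_measure ::
  "(real \<times> real \<Rightarrow> real \<times> real) \<Rightarrow> (real \<times> real) set \<Rightarrow> (real \<times> real) measure"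
  where "self_affine_measure A D = (THE M. is_self_affine_measure A D M)"

definition diagA :: "int \<Rightarrow> int \<Rightarrow> real \<times> real \<Rightarrow> real \<times> real"
  where "diagA q1 q2 x = (3 * of_int q1 * fst x, 3 * of_int q2 * snd x)"

definition sierpD :: "(real \<times> real) set"
  where "sierpD = {(0,0), (1,0), (0,1)}"

definition expo :: "real \<times> real \<Rightarrow> real \<times> real \<Rightarrow> complex"
  where "expo l x = exp (- 2 * complex_of_real pi * \<i> * complex_of_real (l \<bullet> x))"

definition orthogonal_set :: "(real \<times> real) measure \<Rightarrow> (real \<times> real) set \<Rightarrow> bool"
  where "orthogonal_set M \<Lambda> \<longleftrightarrow> countable \<Lambda> \<and>
     (\<forall>l\<in>\<Lambda>. \<forall>l'\<in>\<Lambda>. l \<noteq> l' \<longrightarrow>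
        (LINT x|M. expo l x * cnj (expo l' x)) = 0)"

end

theory Submission imports Defs begin

definition phi :: "int \<Rightarrow> int \<Rightarrow> real \<times> real \<Rightarrow> real \<times> real \<Rightarrow> real \<times> real"
  where "phi q1 q2 d x = ((fst x + fst d) / (3 * of_int q1), (snd x + snd d) / (3 * of_int q2))"

lemma image_eq_vimage:
  assumes "q1 \<ge> 1" "q2 \<ge> 1"
  shows "affine_shift (diagA q1 q2) d ` E = phi q1 q2 d -` E"
proof (rule set_eqI, rule iffI)
  fix y assume "y \<in> affine_shift (diagA q1 q2) d ` E"
  then obtain x where x: "x \<in> E" "y = affine_shift (diagA q1 q2) d x" by blast
  have "phi q1 q2 d (affine_shift (diagA q1 q2) d x) = x"
    using assms by (simp add: phi_def affine_shift_def diagA_def prod_eq_iff)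
  then show "y \<in> phi q1 q2 d -` E" using x by simp
next
  fix y assume "y \<in> phi q1 q2 d -` E"
  then have "phi q1 q2 d y \<in> E" by simp
  moreover have "y = affine_shift (diagA q1 q2) d (phi q1 q2 d y)"
    using assms by (simp add: phi_def affine_shift_def diagA_def prod_eq_iff)
  ultimately show "y \<in> affine_shift (diagA q1 q2) d ` E" by blast
qed

lemma phi_measurable[measurable]: "phi q1 q2 d \<in> borel_measurable borel"
  unfolding phi_def divide_inverse by (intro borel_measurable_continuous_onI continuous_intros)

lemma card_sierpD: "card sierpD = 3"
  by (simp add: sierpD_def)

lemma sierpD_ne: "sierpD \<noteq> {}" and sierpD_fin: "finite sierpD"
  by (auto simp: sierpD_def)

lemma sa_space: "is_self_affine_measure A D M \<Longrightarrow> space M = UNIV"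
  unfolding is_self_affine_measure_def by (metis sets_eq_imp_space_eq space_borel)

lemma sa_eq:
  assumes q: "q1 \<ge> 1" "q2 \<ge> 1" and SA: "is_self_affine_measure (diagA q1 q2) sierpD M"
    and E: "E \<in> sets borel"
  shows "measure M E = (\<Sum>d\<in>sierpD. measure M (phi q1 q2 d -` E)) / 3"
  using SA E unfolding is_self_affine_measure_def image_eq_vimage[OF q] card_sierpD by simp

definition mixK :: "int \<Rightarrow> int \<Rightarrow> (real \<times> real) measure \<Rightarrow> (real \<times> real) measure" where
  "mixK q1 q2 M = measure_pmf (pmf_of_set sierpD) \<bind> (\<lambda>d. distr M borel (phi q1 q2 d))"

lemma mixK_meas:
  assumes SA: "is_self_affine_measure A D M"
  shows "(\<lambda>d. distr M borel (phi q1 q2 d)) \<in> measurable (measure_pmf (pmf_of_set sierpD)) (subprob_algebra borel)"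
proof -
  have P: "prob_space M" using SA unfolding is_self_affine_measure_def by auto
  have sM: "sets M = sets borel" using SA unfolding is_self_affine_measure_def by auto
  have mm: "phi q1 q2 d \<in> measurable M borel" for d
    by (subst measurable_cong_sets[OF sM refl]) (rule phi_measurable)
  show ?thesis
    by (auto simp: space_subprob_algebra intro!: prob_space_imp_subprob_space prob_space.prob_space_distr P mm)
qed

lemma mixture_eq:
  assumes q: "q1 \<ge> 1" "q2 \<ge> 1" and SA: "is_self_affine_measure (diagA q1 q2) sierpD M"
  shows "M = mixK q1 q2 M"
proof (rule measure_eqI)
  have sM: "sets M = sets borel" using SA unfolding is_self_affine_measure_def by auto
  have P: "prob_space M" using SA unfolding is_self_affine_measure_def by auto
  interpret P: prob_space M by (rule P)
  show "sets M = sets (mixK q1 q2 M)"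
    unfolding mixK_def by (subst sets_bind) (auto simp: sM)
  fix E assume "E \<in> sets M"
  then have E: "E \<in> sets borel" using sM by simp
  have "emeasure (mixK q1 q2 M) E = (\<integral>\<^sup>+d. emeasure (distr M borel (phi q1 q2 d)) E \<partial>measure_pmf (pmf_of_set sierpD))"
    unfolding mixK_def by (rule emeasure_bind[where N=borel, OF _ mixK_meas[OF SA] E]) simp
  also have "\<dots> = (\<Sum>d\<in>sierpD. emeasure (distr M borel (phi q1 q2 d)) E) / 3"
    by (simp add: nn_integral_pmf_of_set[OF sierpD_ne sierpD_fin] card_sierpD)
  also have "\<dots> = (\<Sum>d\<in>sierpD. ennreal (measure M (phi q1 q2 d -` E))) / 3"
    using E sa_space[OF SA]
    by (simp add: emeasure_distr measurable_cong_sets[OF sM refl] P.emeasure_eq_measure)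
  also have "\<dots> = ennreal (\<Sum>d\<in>sierpD. measure M (phi q1 q2 d -` E)) / ennreal 3"
    by simp
  also have "\<dots> = ennreal ((\<Sum>d\<in>sierpD. measure M (phi q1 q2 d -` E)) / 3)"
    by (rule divide_ennreal) (auto intro: sum_nonneg)
  also have "\<dots> = ennreal (measure M E)"
    using sa_eq[OF q SA E] by (metis (no_types, lifting))
  also have "\<dots> = emeasure M E" by (simp add: P.emeasure_eq_measure)
  finally show "emeasure M E = emeasure (mixK q1 q2 M) E" by simp
qed

lemma mix_integral_real:
  fixes g :: "real \<times> real \<Rightarrow> real"
  assumes q: "q1 \<ge> 1" "q2 \<ge> 1" and SA: "is_self_affine_measure (diagA q1 q2) sierpD M"
    and g[measurable]: "g \<in> borel_measurable borel" and bnd: "\<And>x. \<bar>g x\<bar> \<le> B"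
  shows "integral\<^sup>L M g = (\<Sum>d\<in>sierpD. \<integral>x. g (phi q1 q2 d x) \<partial>M) / 3"
proof -
  have sM: "sets M = sets borel" using SA unfolding is_self_affine_measure_def by auto
  have P: "prob_space M" using SA unfolding is_self_affine_measure_def by auto
  have mm: "phi q1 q2 d \<in> measurable M borel" for d
    by (subst measurable_cong_sets[OF sM refl]) (rule phi_measurable)
  have one: "emeasure (distr M borel (phi q1 q2 d)) UNIV = 1" for d
    using prob_space.emeasure_space_1[OF prob_space.prob_space_distr[OF P mm[of d]]] by simp
  have "integral\<^sup>L M g = integral\<^sup>L (mixK q1 q2 M) g"
    by (rule arg_cong[where f="\<lambda>N. integral\<^sup>L N g", OF mixture_eq[OF q SA]])
  also have "\<dots> = \<integral>d. integral\<^sup>L (distr M borel (phi q1 q2 d)) g \<partial>measure_pmf (pmf_of_set sierpD)"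
    unfolding mixK_def
    by (rule integral_bind[where K=borel and B=B and B'=1, OF g _ mixK_meas[OF SA]])
       (auto simp: bnd measure_pmf.finite_measure_axioms one)
  also have "\<dots> = (\<Sum>d\<in>sierpD. integral\<^sup>L (distr M borel (phi q1 q2 d)) g) / 3"
    by (simp add: integral_pmf_of_set[OF sierpD_ne sierpD_fin] card_sierpD)
  also have "\<dots> = (\<Sum>d\<in>sierpD. \<integral>x. g (phi q1 q2 d x) \<partial>M) / 3"
    by (simp add: integral_distr[OF mm g])
  finally show ?thesis .
qed

lemma mix_integral_complex:
  fixes g :: "real \<times> real \<Rightarrow> complex"
  assumes q: "q1 \<ge> 1" "q2 \<ge> 1" and SA: "is_self_affine_measure (diagA q1 q2) sierpD M"
    and g[measurable]: "g \<in> borel_measurable borel" and bnd: "\<And>x. norm (g x) \<le> B"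
  shows "integral\<^sup>L M g = (\<Sum>d\<in>sierpD. \<integral>x. g (phi q1 q2 d x) \<partial>M) / 3"
proof -
  have sM: "sets M = sets borel" using SA unfolding is_self_affine_measure_def by auto
  have P: "prob_space M" using SA unfolding is_self_affine_measure_def by auto
  interpret P: prob_space M by (rule P)
  have mm: "phi q1 q2 d \<in> measurable M borel" for d
    by (subst measurable_cong_sets[OF sM refl]) (rule phi_measurable)
  have gM: "g \<in> borel_measurable M"
    by (subst measurable_cong_sets[OF sM refl]) (rule g)
  have ig: "integrable M g"
    by (rule P.integrable_const_bound[where B=B]) (auto simp: bnd gM)
  have igd: "integrable M (\<lambda>x. g (phi q1 q2 d x))" for d
    by (rule P.integrable_const_bound[where B=B]) (auto simp: bnd intro: measurable_compose[OF mm g])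
  have "Re (integral\<^sup>L M g) = integral\<^sup>L M (\<lambda>x. Re (g x))"
    using ig by simp
  also have "\<dots> = (\<Sum>d\<in>sierpD. \<integral>x. Re (g (phi q1 q2 d x)) \<partial>M) / 3"
    by (rule mix_integral_real[OF q SA, where B=B]) (auto intro: order_trans[OF abs_Re_le_cmod bnd])
  also have "\<dots> = Re ((\<Sum>d\<in>sierpD. \<integral>x. g (phi q1 q2 d x) \<partial>M) / 3)"
    using igd by (simp add: Re_sum)
  finally have re: "Re (integral\<^sup>L M g) = Re ((\<Sum>d\<in>sierpD. \<integral>x. g (phi q1 q2 d x) \<partial>M) / 3)" .
  have "Im (integral\<^sup>L M g) = integral\<^sup>L M (\<lambda>x. Im (g x))"
    using ig by simp
  also have "\<dots> = (\<Sum>d\<in>sierpD. \<integral>x. Im (g (phi q1 q2 d x)) \<partial>M) / 3"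
    by (rule mix_integral_real[OF q SA, where B=B]) (auto intro: order_trans[OF abs_Im_le_cmod bnd])
  also have "\<dots> = Im ((\<Sum>d\<in>sierpD. \<integral>x. g (phi q1 q2 d x) \<partial>M) / 3)"
    using igd by (simp add: Im_sum)
  finally have im: "Im (integral\<^sup>L M g) = Im ((\<Sum>d\<in>sierpD. \<integral>x. g (phi q1 q2 d x) \<partial>M) / 3)" .
  show ?thesis using re im by (rule complex_eqI)
qed

definition ex :: "real \<Rightarrow> real \<Rightarrow> complex" where
  "ex s y = exp (\<i> * complex_of_real (-2 * pi * s * y))"

lemma ex_add: "ex s (a + b) = ex s a * ex s b"
  unfolding ex_def by (simp add: algebra_simps exp_add[symmetric])

lemma ex_div: "ex s (y / N) = ex (s / N) y"
  unfolding ex_def by simp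

lemma norm_ex[simp]: "norm (ex s y) = 1"
  unfolding ex_def by simp

lemma ex_zero[simp]: "ex 0 y = 1"
  unfolding ex_def by simp

lemma ex_measurable[measurable]: "ex s \<in> borel_measurable borel"
  unfolding ex_def by (intro borel_measurable_continuous_onI continuous_intros)

lemma two_plus_ex_nz: "2 + ex s y \<noteq> 0"
proof
  assume "2 + ex s y = 0"
  then have "ex s y = -2" by (simp add: add_eq_0_iff)
  then have "norm (ex s y) = 2" by simp
  then show False by simp
qed

lemma expo_prod:
  "expo l x * cnj (expo l' x) = ex 1 ((fst l - fst l') * fst x + (snd l - snd l') * snd x)"
proof -
  have "expo l x * cnj (expo l' x) =
     exp (- 2 * complex_of_real pi * \<i> * complex_of_real (l \<bullet> x) + cnj (- 2 * complex_of_real pi * \<i> * complex_of_real (l' \<bullet> x)))"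
    unfolding expo_def by (simp add: exp_cnj flip: exp_add)
  also have "\<dots> = ex 1 ((fst l - fst l') * fst x + (snd l - snd l') * snd x)"
    unfolding ex_def inner_prod_def by (simp add: algebra_simps)
  finally show ?thesis .
qed

lemma fourier_axis:
  fixes sel :: "real \<times> real \<Rightarrow> real" and N :: real
  assumes q: "q1 \<ge> 1" "q2 \<ge> 1" and SA: "is_self_affine_measure (diagA q1 q2) sierpD M"
    and sel[measurable]: "sel \<in> borel_measurable borel"
    and H: "\<And>x d. sel (phi q1 q2 d x) = (sel x + sel d) / N"
    and Hs: "\<And>s. (\<Sum>d\<in>sierpD. ex s (sel d)) = 2 + ex s 1"
    and N: "N > 1"
  shows "(\<integral>x. ex t (sel x) \<partial>M) \<noteq> 0"
proof
  assume t0: "(\<integral>x. ex t (sel x) \<partial>M) = 0"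
  have sM: "sets M = sets borel" using SA unfolding is_self_affine_measure_def by auto
  have P: "prob_space M" using SA unfolding is_self_affine_measure_def by auto
  interpret P: prob_space M by (rule P)
  have rec: "(\<integral>x. ex s (sel x) \<partial>M) = (\<integral>x. ex (s / N) (sel x) \<partial>M) * ((2 + ex (s / N) 1) / 3)" for s
  proof -
    have "(\<integral>x. ex s (sel x) \<partial>M) = (\<Sum>d\<in>sierpD. \<integral>x. ex s (sel (phi q1 q2 d x)) \<partial>M) / 3"
      by (rule mix_integral_complex[OF q SA, where B=1]) auto
    also have "\<dots> = (\<Sum>d\<in>sierpD. (\<integral>x. ex (s / N) (sel x) \<partial>M) * ex (s / N) (sel d)) / 3"
      by (simp add: H ex_div[symmetric] add_divide_distrib ex_add)
    also have "\<dots> = (\<integral>x. ex (s / N) (sel x) \<partial>M) * ((2 + ex (s / N) 1) / 3)"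
      by (simp add: sum_distrib_left[symmetric] Hs)
    finally show ?thesis .
  qed
  have z: "(\<integral>x. ex (t / N ^ n) (sel x) \<partial>M) = 0" for n
  proof (induction n)
    case 0 then show ?case using t0 by simp
  next
    case (Suc n)
    have "(\<integral>x. ex (t / N ^ n) (sel x) \<partial>M) = (\<integral>x. ex (t / N ^ Suc n) (sel x) \<partial>M) * ((2 + ex (t / N ^ Suc n) 1) / 3)"
      using rec[of "t / N ^ n"] by (simp add: divide_divide_eq_left mult.commute)
    with Suc.IH show ?case using two_plus_ex_nz by simp
  qed
  have tz: "(\<lambda>n. t / N ^ n) \<longlonglongrightarrow> 0"
  proof -
    have "(\<lambda>n. t * (1 / N) ^ n) \<longlonglongrightarrow> t * 0"
      using N by (intro tendsto_mult tendsto_const LIMSEQ_power_zero) auto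
    then show ?thesis by (simp add: power_one_over divide_inverse power_inverse)
  qed
  have lim: "(\<lambda>n. \<integral>x. ex (t / N ^ n) (sel x) \<partial>M) \<longlonglongrightarrow> (\<integral>x. ex 0 (sel x) \<partial>M)"
  proof (rule integral_dominated_convergence[where w="\<lambda>_. 1"])
    show "(\<lambda>x. ex 0 (sel x)) \<in> borel_measurable M" by simp
    show "(\<lambda>x. ex (t / N ^ n) (sel x)) \<in> borel_measurable M" for n
      by (subst measurable_cong_sets[OF sM refl]) measurable
    show "integrable M (\<lambda>_. 1::real)" by simp
    show "AE x in M. (\<lambda>n. ex (t / N ^ n) (sel x)) \<longlonglongrightarrow> ex 0 (sel x)"
    proof (rule AE_I2)
      fix x
      have "(\<lambda>n. exp (\<i> * complex_of_real (-2 * pi * (t / N ^ n) * sel x))) \<longlonglongrightarrow> exp (\<i> * complex_of_real (-2 * pi * 0 * sel x))"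
        by (intro tendsto_intros tz)
      then show "(\<lambda>n. ex (t / N ^ n) (sel x)) \<longlonglongrightarrow> ex 0 (sel x)" unfolding ex_def .
    qed
    show "AE x in M. norm (ex (t / N ^ n) (sel x)) \<le> 1" for n by simp
  qed
  then have "(\<lambda>n. 0::complex) \<longlonglongrightarrow> 1" using z by (simp add: P.prob_space)
  then show False using LIMSEQ_unique[OF tendsto_const] by fastforce
qed


definition Top :: "int \<Rightarrow> int \<Rightarrow> (real \<times> real \<Rightarrow> real) \<Rightarrow> real \<times> real \<Rightarrow> real" where
  "Top q1 q2 g x = (\<Sum>d\<in>sierpD. g (phi q1 q2 d x)) / 3"

lemma Top_measurable[measurable]: "g \<in> borel_measurable borel \<Longrightarrow> Top q1 q2 g \<in> borel_measurable borel"
  unfolding Top_def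
  by (intro borel_measurable_divide borel_measurable_sum borel_measurable_const measurable_compose[OF phi_measurable])

lemma Top_bound: "(\<And>x. \<bar>g x\<bar> \<le> B) \<Longrightarrow> \<bar>Top q1 q2 g x\<bar> \<le> B"
proof -
  assume b: "\<And>x. \<bar>g x\<bar> \<le> B"
  have "\<bar>\<Sum>d\<in>sierpD. g (phi q1 q2 d x)\<bar> \<le> (\<Sum>d\<in>sierpD. \<bar>g (phi q1 q2 d x)\<bar>)" by (rule sum_abs)
  also have "\<dots> \<le> (\<Sum>d\<in>sierpD. B)" by (intro sum_mono b)
  also have "\<dots> = 3 * B" by (simp add: card_sierpD)
  finally show ?thesis unfolding Top_def by simp
qed

lemma dist_phi:
  assumes q: "q1 \<ge> 1" "q2 \<ge> 1"
  shows "dist (phi q1 q2 d x) (phi q1 q2 d y) \<le> dist x y / 3"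
proof -
  define a where "a = fst x - fst y"
  define b where "b = snd x - snd y"
  have ea: "fst (phi q1 q2 d x) - fst (phi q1 q2 d y) = a / (3 * q1)"
    unfolding phi_def a_def by (simp add: diff_divide_distrib[symmetric])
  have eb: "snd (phi q1 q2 d x) - snd (phi q1 q2 d y) = b / (3 * q2)"
    unfolding phi_def b_def by (simp add: diff_divide_distrib[symmetric])
  have h1: "(a / (3 * q1))\<^sup>2 \<le> a\<^sup>2 / 9"
  proof -
    have "(a / (3 * q1))\<^sup>2 = a\<^sup>2 / (9 * (real_of_int q1)\<^sup>2)" by (simp add: power_divide power_mult_distrib)
    also have "\<dots> \<le> a\<^sup>2 / 9" using q by (intro divide_left_mono) (auto simp: one_le_power)
    finally show ?thesis .
  qed
  have h2: "(b / (3 * q2))\<^sup>2 \<le> b\<^sup>2 / 9"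
  proof -
    have "(b / (3 * q2))\<^sup>2 = b\<^sup>2 / (9 * (real_of_int q2)\<^sup>2)" by (simp add: power_divide power_mult_distrib)
    also have "\<dots> \<le> b\<^sup>2 / 9" using q by (intro divide_left_mono) (auto simp: one_le_power)
    finally show ?thesis .
  qed
  have "dist (phi q1 q2 d x) (phi q1 q2 d y) = sqrt ((a / (3 * q1))\<^sup>2 + (b / (3 * q2))\<^sup>2)"
    unfolding dist_prod_def dist_real_def using ea eb by (simp add: power_divide)
  also have "\<dots> \<le> sqrt ((a\<^sup>2 + b\<^sup>2) / 9)" using h1 h2 by (intro real_sqrt_le_mono) simp
  also have "\<dots> = sqrt (a\<^sup>2 + b\<^sup>2) / 3" by (simp add: real_sqrt_divide)
  also have "sqrt (a\<^sup>2 + b\<^sup>2) = dist x y" unfolding dist_prod_def dist_real_def a_def b_def by simp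
  finally show ?thesis .
qed

lemma Top_lip:
  assumes q: "q1 \<ge> 1" "q2 \<ge> 1" and L: "L \<ge> 0"
    and lip: "\<And>x y. \<bar>g x - g y\<bar> \<le> L * dist x y"
  shows "\<bar>Top q1 q2 g x - Top q1 q2 g y\<bar> \<le> (L / 3) * dist x y"
proof -
  have "\<bar>Top q1 q2 g x - Top q1 q2 g y\<bar> = \<bar>\<Sum>d\<in>sierpD. g (phi q1 q2 d x) - g (phi q1 q2 d y)\<bar> / 3"
    unfolding Top_def by (simp add: sum_subtractf diff_divide_distrib[symmetric])
  also have "\<dots> \<le> (\<Sum>d\<in>sierpD. \<bar>g (phi q1 q2 d x) - g (phi q1 q2 d y)\<bar>) / 3"
    by (intro divide_right_mono sum_abs) simp
  also have "\<dots> \<le> (\<Sum>d\<in>sierpD. L * (dist x y / 3)) / 3"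
    by (intro divide_right_mono sum_mono order_trans[OF lip] mult_left_mono dist_phi q L) simp
  also have "\<dots> = (L / 3) * dist x y" by (simp add: card_sierpD)
  finally show ?thesis .
qed

fun Titer :: "int \<Rightarrow> int \<Rightarrow> nat \<Rightarrow> (real \<times> real \<Rightarrow> real) \<Rightarrow> real \<times> real \<Rightarrow> real" where
  "Titer q1 q2 0 g = g"
| "Titer q1 q2 (Suc n) g = Top q1 q2 (Titer q1 q2 n g)"

lemma Titer_props:
  assumes q: "q1 \<ge> 1" "q2 \<ge> 1" and L: "L \<ge> 0" and g: "g \<in> borel_measurable borel"
    and b: "\<And>x. \<bar>g x\<bar> \<le> B"
    and lip: "\<And>x y. \<bar>g x - g y\<bar> \<le> L * dist x y"
  shows "Titer q1 q2 n g \<in> borel_measurable borel \<and> (\<forall>x. \<bar>Titer q1 q2 n g x\<bar> \<le> B) \<and>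
    (\<forall>x y. \<bar>Titer q1 q2 n g x - Titer q1 q2 n g y\<bar> \<le> (L / 3 ^ n) * dist x y)"
proof (induction n)
  case 0 then show ?case using g b lip by simp
next
  case (Suc n)
  then show ?case using Top_lip[OF q, of "L / 3 ^ n" "Titer q1 q2 n g"] L
    by (auto intro!: Top_bound simp: Top_measurable ac_simps)
qed

lemma sa_integral_Top:
  assumes q: "q1 \<ge> 1" "q2 \<ge> 1" and SA: "is_self_affine_measure (diagA q1 q2) sierpD M"
    and g[measurable]: "g \<in> borel_measurable borel" and bnd: "\<And>x. \<bar>g x\<bar> \<le> B"
  shows "integral\<^sup>L M g = integral\<^sup>L M (Top q1 q2 g)"
proof -
  have sM: "sets M = sets borel" using SA unfolding is_self_affine_measure_def by auto
  have P: "prob_space M" using SA unfolding is_self_affine_measure_def by auto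
  interpret P: prob_space M by (rule P)
  have mm: "phi q1 q2 d \<in> measurable M borel" for d
    by (subst measurable_cong_sets[OF sM refl]) (rule phi_measurable)
  have igd: "integrable M (\<lambda>x. g (phi q1 q2 d x))" for d
    by (rule P.integrable_const_bound[where B=B]) (auto simp: bnd intro: measurable_compose[OF mm g])
  show ?thesis
    unfolding Top_def using igd by (simp add: mix_integral_real[OF q SA g bnd])
qed

lemma sa_limit:
  assumes q: "q1 \<ge> 1" "q2 \<ge> 1" and SA: "is_self_affine_measure (diagA q1 q2) sierpD M"
    and L: "L \<ge> 0" and g: "g \<in> borel_measurable borel"
    and b: "\<And>x. \<bar>g x\<bar> \<le> B"
    and lip: "\<And>x y. \<bar>g x - g y\<bar> \<le> L * dist x y"
  shows "(\<lambda>n. Titer q1 q2 n g 0) \<longlonglongrightarrow> integral\<^sup>L M g"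
proof -
  have sM: "sets M = sets borel" using SA unfolding is_self_affine_measure_def by auto
  have P: "prob_space M" using SA unfolding is_self_affine_measure_def by auto
  interpret P: prob_space M by (rule P)
  note TP = Titer_props[OF q L g b lip]
  have mT: "Titer q1 q2 n g \<in> borel_measurable M" for n
    by (subst measurable_cong_sets[OF sM refl]) (use TP in blast)
  have iT: "integrable M (Titer q1 q2 n g)" for n
    by (rule P.integrable_const_bound[where B=B]) (use TP mT in auto)
  have eqn: "integral\<^sup>L M g = integral\<^sup>L M (Titer q1 q2 n g)" for n
  proof (induction n)
    case (Suc n) then show ?case using sa_integral_Top[OF q SA, of "Titer q1 q2 n g" B] TP by simp
  qed simp
  have "(\<lambda>n. integral\<^sup>L M (\<lambda>x. Titer q1 q2 n g x - Titer q1 q2 n g 0)) \<longlonglongrightarrow> integral\<^sup>L M (\<lambda>x. 0::real)"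
  proof (rule integral_dominated_convergence[where w="\<lambda>_. 2 * B"])
    show "(\<lambda>x. 0::real) \<in> borel_measurable M" by simp
    show "(\<lambda>x. Titer q1 q2 n g x - Titer q1 q2 n g 0) \<in> borel_measurable M" for n
      using mT by measurable
    show "integrable M (\<lambda>_. 2 * B)" by simp
    show "AE x in M. (\<lambda>n. Titer q1 q2 n g x - Titer q1 q2 n g 0) \<longlonglongrightarrow> 0"
    proof (rule AE_I2)
      fix x :: "real \<times> real"
      have "(\<lambda>n. L * dist x 0 * (1 / 3) ^ n) \<longlonglongrightarrow> L * dist x 0 * 0"
        by (intro tendsto_mult tendsto_const LIMSEQ_power_zero) auto
      then have lim0: "(\<lambda>n. L / 3 ^ n * dist x 0) \<longlonglongrightarrow> 0"
        by (simp add: power_one_over field_simps)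
      have LL: "\<forall>x y. \<bar>Titer q1 q2 n g x - Titer q1 q2 n g y\<bar> \<le> (L / 3 ^ n) * dist x y" for n
        using TP by blast
      have LL2: "\<bar>Titer q1 q2 n g x - Titer q1 q2 n g 0\<bar> \<le> L / 3 ^ n * dist x 0" for n
        using LL[of n] by blast
      have "\<forall>n. norm (Titer q1 q2 n g x - Titer q1 q2 n g 0) \<le> L / 3 ^ n * dist x 0"
        using LL2 by (simp only: real_norm_def) blast
      then show "(\<lambda>n. Titer q1 q2 n g x - Titer q1 q2 n g 0) \<longlonglongrightarrow> 0"
        by (intro Lim_null_comparison[OF always_eventually lim0])
    qed
    show "AE x in M. norm (Titer q1 q2 n g x - Titer q1 q2 n g 0) \<le> 2 * B" for n
    proof (rule AE_I2)
      fix x :: "real \<times> real"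
      have "\<bar>Titer q1 q2 n g x\<bar> \<le> B" "\<bar>Titer q1 q2 n g 0\<bar> \<le> B" using TP[of n] by blast+
      then show "norm (Titer q1 q2 n g x - Titer q1 q2 n g 0) \<le> 2 * B" by simp
    qed
  qed
  then have "(\<lambda>n. integral\<^sup>L M g - Titer q1 q2 n g 0) \<longlonglongrightarrow> 0"
    using iT by (simp add: eqn[symmetric] P.prob_space)
  then have "(\<lambda>n. integral\<^sup>L M g - (integral\<^sup>L M g - Titer q1 q2 n g 0)) \<longlonglongrightarrow> integral\<^sup>L M g - 0"
    by (intro tendsto_diff tendsto_const)
  then show ?thesis by simp
qed


lemma sa_integral_unique:
  assumes q: "q1 \<ge> 1" "q2 \<ge> 1"
    and SA: "is_self_affine_measure (diagA q1 q2) sierpD M"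
    and SB: "is_self_affine_measure (diagA q1 q2) sierpD N"
    and L: "L \<ge> 0" and g: "g \<in> borel_measurable borel"
    and b: "\<And>x. \<bar>g x\<bar> \<le> B"
    and lip: "\<And>x y. \<bar>g x - g y\<bar> \<le> L * dist x y"
  shows "integral\<^sup>L M g = integral\<^sup>L N g"
  using LIMSEQ_unique[OF sa_limit[OF q SA L g b lip] sa_limit[OF q SB L g b lip]] .

definition fapp :: "(real \<times> real) set \<Rightarrow> nat \<Rightarrow> real \<times> real \<Rightarrow> real" where
  "fapp C m x = max 0 (1 - real m * infdist x C)"

lemma fapp_meas: "fapp C m \<in> borel_measurable borel"
  unfolding fapp_def by (intro borel_measurable_continuous_onI continuous_intros)

lemma fapp_bound: "\<bar>fapp C m x\<bar> \<le> 1"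
  unfolding fapp_def using infdist_nonneg[of x C] by (auto simp: max_def)

lemma fapp_lip: "\<bar>fapp C m x - fapp C m y\<bar> \<le> real m * dist x y"
proof -
  have a: "\<bar>max 0 u - max 0 v\<bar> \<le> \<bar>u - v\<bar>" for u v :: real by (auto simp: max_def)
  have "\<bar>fapp C m x - fapp C m y\<bar> \<le> \<bar>(1 - real m * infdist x C) - (1 - real m * infdist y C)\<bar>"
    unfolding fapp_def by (rule a)
  also have "\<dots> = real m * \<bar>infdist x C - infdist y C\<bar>" by (simp add: abs_mult abs_minus_commute flip: right_diff_distrib)
  also have "\<dots> \<le> real m * dist x y" by (intro mult_left_mono infdist_triangle_abs) simp
  finally show ?thesis .
qed

lemma fapp_limit:
  assumes P: "prob_space X" and sX: "sets X = sets borel" and C: "closed C" "C \<noteq> {}"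
  shows "(\<lambda>m. integral\<^sup>L X (fapp C m)) \<longlonglongrightarrow> measure X C"
proof -
  interpret P: prob_space X by (rule P)
  have spX: "space X = UNIV" using sX by (metis sets_eq_imp_space_eq space_borel)
  have "(\<lambda>m. integral\<^sup>L X (fapp C m)) \<longlonglongrightarrow> integral\<^sup>L X (indicator C)"
  proof (rule integral_dominated_convergence[where w="\<lambda>_. 1"])
    show "(indicator C :: _ \<Rightarrow> real) \<in> borel_measurable X"
      by (subst measurable_cong_sets[OF sX refl]) (intro borel_measurable_indicator borel_closed C(1))
    show "fapp C m \<in> borel_measurable X" for m
      by (subst measurable_cong_sets[OF sX refl]) (rule fapp_meas)
    show "integrable X (\<lambda>_. 1::real)" by simp
    show "AE x in X. norm (fapp C m x) \<le> 1" for m using fapp_bound by simp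
    show "AE x in X. (\<lambda>m. fapp C m x) \<longlonglongrightarrow> indicator C x"
    proof (rule AE_I2)
      fix x :: "real \<times> real"
      show "(\<lambda>m. fapp C m x) \<longlonglongrightarrow> indicator C x"
      proof (cases "x \<in> C")
        case True then show ?thesis by (simp add: fapp_def)
      next
        case False
        then have d: "infdist x C > 0" using C infdist_pos_not_in_closed by blast
        have "eventually (\<lambda>m. fapp C m x = 0) sequentially"
          unfolding eventually_sequentially
        proof (intro exI allI impI)
          fix m assume "nat \<lceil>1 / infdist x C\<rceil> \<le> m"
          then have "1 / infdist x C \<le> real m" by linarith
          then have "1 \<le> real m * infdist x C" using d by (simp add: field_simps)
          then show "fapp C m x = 0" unfolding fapp_def by simp
        qed
        then show ?thesis using False by (simp add: tendsto_eventually)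
      qed
    qed
  qed
  then show ?thesis using spX by simp
qed

lemma sa_unique:
  assumes q: "q1 \<ge> 1" "q2 \<ge> 1"
    and SA: "is_self_affine_measure (diagA q1 q2) sierpD M"
    and SB: "is_self_affine_measure (diagA q1 q2) sierpD N"
  shows "M = N"
proof -
  have sM: "sets M = sets borel" and PM: "prob_space M"
    using SA unfolding is_self_affine_measure_def by auto
  have sN: "sets N = sets borel" and PN: "prob_space N"
    using SB unfolding is_self_affine_measure_def by auto
  interpret PM: prob_space M by (rule PM)
  interpret PN: prob_space N by (rule PN)
  have closed_eq: "emeasure M C = emeasure N C" if C: "closed C" for C
  proof (cases "C = {}")
    case True then show ?thesis by simp
  next
    case False
    have ie: "integral\<^sup>L M (fapp C m) = integral\<^sup>L N (fapp C m)" for m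
      by (rule sa_integral_unique[OF q SA SB _ fapp_meas fapp_bound fapp_lip]) simp
    have l2: "(\<lambda>m. integral\<^sup>L M (fapp C m)) \<longlonglongrightarrow> measure N C"
      using fapp_limit[OF PN sN C False] by (simp add: ie)
    have "measure M C = measure N C"
      using LIMSEQ_unique[OF fapp_limit[OF PM sM C False] l2] .
    then show ?thesis
      by (simp add: PM.emeasure_eq_measure PN.emeasure_eq_measure)
  qed
  have sb: "sets borel = sigma_sets UNIV (Collect closed)"
    unfolding borel_eq_closed by (rule sets_measure_of) simp
  show ?thesis
  proof (rule measure_eqI_generator_eq[where E="Collect closed" and \<Omega>=UNIV and A="\<lambda>_. UNIV"])
    show "Int_stable (Collect closed)" by (auto simp: Int_stable_def)
  qed (auto simp: sM sN sb closed_eq prob_space.emeasure_space_1[OF PM]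
        intro: closed_eq)
qed


lemma snd_meas: "(snd :: real \<times> real \<Rightarrow> real) \<in> borel_measurable borel"
  by (rule borel_measurable_continuous_onI) (intro continuous_intros)

lemma fst_meas: "(fst :: real \<times> real \<Rightarrow> real) \<in> borel_measurable borel"
  by (rule borel_measurable_continuous_onI) (intro continuous_intros)

lemma ex_arg0[simp]: "ex s 0 = 1"
  unfolding ex_def by simp



definition clamp :: "real \<Rightarrow> real" where "clamp y = max 0 (min 1 y)"

definition Sp :: "(real \<times> real) stream measure" where
  "Sp = stream_space (measure_pmf (pmf_of_set sierpD))"

definition ser :: "real \<Rightarrow> (nat \<Rightarrow> real) \<Rightarrow> nat \<Rightarrow> real" where
  "ser N c k = clamp (c k) / N ^ Suc k"

definition Fmap :: "int \<Rightarrow> int \<Rightarrow> (real \<times> real) stream \<Rightarrow> real \<times> real" where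
  "Fmap q1 q2 s = (\<Sum>k. ser (3 * of_int q1) (\<lambda>k. fst (s !! k)) k, \<Sum>k. ser (3 * of_int q2) (\<lambda>k. snd (s !! k)) k)"

lemma summable_ser:
  assumes N: "N \<ge> 3" shows "summable (ser N c)"
proof (rule summable_comparison_test[where g="\<lambda>k. (1 / N) ^ Suc k"])
  show "\<exists>n0. \<forall>k\<ge>n0. norm (ser N c k) \<le> (1 / N) ^ Suc k"
  proof (intro exI allI impI)
    fix k :: nat
    have "0 \<le> clamp (c k)" "clamp (c k) \<le> 1" unfolding clamp_def by auto
    moreover have "N ^ Suc k > 0" using N by simp
    ultimately show "norm (ser N c k) \<le> (1 / N) ^ Suc k"
      unfolding ser_def by (simp add: power_one_over divide_right_mono)
  qed
  show "summable (\<lambda>k. (1 / N) ^ Suc k)"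
    using N by (intro summable_ignore_initial_segment[where k=1, simplified] summable_geometric) (use N in simp)
qed

lemma suminf_ser_cons:
  assumes N: "N \<ge> 3"
  shows "(\<Sum>k. ser N c k) = (clamp (c 0) + (\<Sum>k. ser N (\<lambda>k. c (Suc k)) k)) / N"
proof -
  have "(\<Sum>k. ser N c (Suc k)) = (\<Sum>k. ser N c k) - ser N c 0"
    by (rule suminf_split_head[OF summable_ser[OF N]])
  moreover have "(\<Sum>k. ser N c (Suc k)) = (\<Sum>k. ser N (\<lambda>k. c (Suc k)) k / N)"
    by (intro arg_cong[where f=suminf] ext) (simp add: ser_def mult.commute)
  moreover have "(\<Sum>k. ser N (\<lambda>k. c (Suc k)) k / N) = (\<Sum>k. ser N (\<lambda>k. c (Suc k)) k) / N"
    by (rule suminf_divide[OF summable_ser[OF N]])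
  moreover have "ser N c 0 = clamp (c 0) / N" by (simp add: ser_def)
  ultimately show ?thesis by (simp only: add_divide_distrib)
qed

lemma Fmap_cons:
  assumes q: "q1 \<ge> 1" "q2 \<ge> 1" and x: "x \<in> sierpD"
  shows "Fmap q1 q2 (x ## s) = phi q1 q2 x (Fmap q1 q2 s)"
proof -
  have N1: "3 * real_of_int q1 \<ge> 3" and N2: "3 * real_of_int q2 \<ge> 3" using q by auto
  have c1: "clamp (fst x) = fst x" and c2: "clamp (snd x) = snd x"
    using x by (auto simp: sierpD_def clamp_def)
  have e1: "(\<Sum>k. ser (3 * real_of_int q1) (\<lambda>k. fst ((x ## s) !! k)) k) =
      (fst x + (\<Sum>k. ser (3 * real_of_int q1) (\<lambda>k. fst (s !! k)) k)) / (3 * real_of_int q1)"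
    using suminf_ser_cons[OF N1, of "\<lambda>k. fst ((x ## s) !! k)"] c1 by simp
  have e2: "(\<Sum>k. ser (3 * real_of_int q2) (\<lambda>k. snd ((x ## s) !! k)) k) =
      (snd x + (\<Sum>k. ser (3 * real_of_int q2) (\<lambda>k. snd (s !! k)) k)) / (3 * real_of_int q2)"
    using suminf_ser_cons[OF N2, of "\<lambda>k. snd ((x ## s) !! k)"] c2 by simp
  show ?thesis
    unfolding Fmap_def phi_def by (simp only: e1 e2 fst_conv snd_conv add.commute)
qed

lemma Sp_prob: "prob_space Sp"
  unfolding Sp_def by (rule prob_space.prob_space_stream_space[OF prob_space_measure_pmf])

lemma Fmap_meas: "Fmap q1 q2 \<in> borel_measurable Sp"
proof -
  have t: "(\<lambda>s. ser N (\<lambda>k. h (s !! k)) k) \<in> borel_measurable Sp" for N h k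
  proof -
    have "(\<lambda>d. clamp (h d) / N ^ Suc k) \<in> measurable (measure_pmf (pmf_of_set sierpD)) borel" by simp
    from measurable_compose[OF measurable_snth this] show ?thesis
      unfolding Sp_def ser_def .
  qed
  show ?thesis unfolding Fmap_def
    by (intro borel_measurable_Pair borel_measurable_suminf t)
qed

definition M0 :: "int \<Rightarrow> int \<Rightarrow> (real \<times> real) measure" where
  "M0 q1 q2 = distr Sp borel (Fmap q1 q2)"

lemma M0_sa:
  assumes q: "q1 \<ge> 1" "q2 \<ge> 1"
  shows "is_self_affine_measure (diagA q1 q2) sierpD (M0 q1 q2)"
proof -
  have P: "prob_space (M0 q1 q2)"
    unfolding M0_def by (rule prob_space.prob_space_distr[OF Sp_prob Fmap_meas])
  interpret P: prob_space "M0 q1 q2" by (rule P)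
  have sM: "sets (M0 q1 q2) = sets borel" unfolding M0_def by simp
  have em: "emeasure (M0 q1 q2) E = (\<Sum>d\<in>sierpD. emeasure (M0 q1 q2) (phi q1 q2 d -` E)) / 3"
    if E: "E \<in> sets borel" for E
  proof -
    have Em[measurable]: "E \<in> sets borel" by (rule E)
    have FE: "(\<lambda>s. indicator E (Fmap q1 q2 s) :: ennreal) \<in> borel_measurable Sp"
      using Fmap_meas by measurable
    have pre: "emeasure (M0 q1 q2) A = (\<integral>\<^sup>+s. indicator A (Fmap q1 q2 s) \<partial>Sp)" if A: "A \<in> sets borel" for A
    proof -
      have "emeasure (M0 q1 q2) A = (\<integral>\<^sup>+x. indicator A x \<partial>M0 q1 q2)"
        using A sM by simp
      also have "\<dots> = (\<integral>\<^sup>+s. indicator A (Fmap q1 q2 s) \<partial>Sp)"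
        unfolding M0_def using A by (subst nn_integral_distr[OF Fmap_meas]) auto
      finally show ?thesis .
    qed
    have "emeasure (M0 q1 q2) E = (\<integral>\<^sup>+s. indicator E (Fmap q1 q2 s) \<partial>Sp)" by (rule pre[OF E])
    also have "\<dots> = (\<integral>\<^sup>+x. (\<integral>\<^sup>+s. indicator E (Fmap q1 q2 (x ## s)) \<partial>Sp) \<partial>measure_pmf (pmf_of_set sierpD))"
      using FE unfolding Sp_def
      by (rule prob_space.nn_integral_stream_space[OF prob_space_measure_pmf])
    also have "\<dots> = (\<Sum>x\<in>sierpD. (\<integral>\<^sup>+s. indicator E (Fmap q1 q2 (x ## s)) \<partial>Sp)) / 3"
      by (simp add: nn_integral_pmf_of_set[OF sierpD_ne sierpD_fin] card_sierpD)
    also have "\<dots> = (\<Sum>x\<in>sierpD. emeasure (M0 q1 q2) (phi q1 q2 x -` E)) / 3"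
    proof -
      have "(\<integral>\<^sup>+s. indicator E (Fmap q1 q2 (x ## s)) \<partial>Sp) = emeasure (M0 q1 q2) (phi q1 q2 x -` E)"
        if x: "x \<in> sierpD" for x
      proof -
        have "phi q1 q2 x -` E \<in> sets borel" using measurable_sets[OF phi_measurable E] by simp
        then have "emeasure (M0 q1 q2) (phi q1 q2 x -` E) = (\<integral>\<^sup>+s. indicator (phi q1 q2 x -` E) (Fmap q1 q2 s) \<partial>Sp)"
          by (rule pre)
        also have "\<dots> = (\<integral>\<^sup>+s. indicator E (Fmap q1 q2 (x ## s)) \<partial>Sp)"
          by (simp add: Fmap_cons[OF q x] indicator_def)
        finally show ?thesis by simp
      qed
      then show ?thesis by simp
    qed
    finally show ?thesis .
  qed
  have "measure (M0 q1 q2) E = (1 / real (card sierpD)) * (\<Sum>d\<in>sierpD. measure (M0 q1 q2) (affine_shift (diagA q1 q2) d ` E))"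
    if E: "E \<in> sets borel" for E
  proof -
    have "ennreal (measure (M0 q1 q2) E) = (\<Sum>d\<in>sierpD. ennreal (measure (M0 q1 q2) (phi q1 q2 d -` E))) / 3"
      using em[OF E] by (simp add: P.emeasure_eq_measure)
    also have "\<dots> = ennreal (\<Sum>d\<in>sierpD. measure (M0 q1 q2) (phi q1 q2 d -` E)) / ennreal 3"
      by simp
    also have "\<dots> = ennreal ((\<Sum>d\<in>sierpD. measure (M0 q1 q2) (phi q1 q2 d -` E)) / 3)"
      by (rule divide_ennreal) (auto intro: sum_nonneg)
    finally have "measure (M0 q1 q2) E = (\<Sum>d\<in>sierpD. measure (M0 q1 q2) (phi q1 q2 d -` E)) / 3"
      by (simp add: sum_nonneg)
    then show ?thesis by (simp add: image_eq_vimage[OF q] card_sierpD)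
  qed
  then show ?thesis unfolding is_self_affine_measure_def using P sM by auto
qed

lemma sa_exists_unique:
  assumes "q1 \<ge> 1" "q2 \<ge> 1"
  shows "\<exists>!M. is_self_affine_measure (diagA q1 q2) sierpD M"
  using M0_sa[OF assms] sa_unique[OF assms] by blast

theorem proposition4p1:
  fixes q1 q2 :: int and \<Lambda> :: "(real \<times> real) set"
  assumes "1 \<le> q1" and "q1 \<le> q2"
    and "orthogonal_set (self_affine_measure (diagA q1 q2) sierpD) \<Lambda>"
  shows "\<forall>l\<in>\<Lambda>. \<forall>l'\<in>\<Lambda>. l \<noteq> l' \<longrightarrow> fst l \<noteq> fst l' \<and> snd l \<noteq> snd l'"
proof (intro ballI impI)
  fix l l' assume l: "l \<in> \<Lambda>" "l' \<in> \<Lambda>" "l \<noteq> l'"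
  have q: "q1 \<ge> 1" "q2 \<ge> 1" using assms by auto
  define M where "M = self_affine_measure (diagA q1 q2) sierpD"
  have SA: "is_self_affine_measure (diagA q1 q2) sierpD M"
    unfolding M_def self_affine_measure_def by (rule theI'[OF sa_exists_unique[OF q]])
  have orth: "(\<integral>x. ex 1 ((fst l - fst l') * fst x + (snd l - snd l') * snd x) \<partial>M) = 0"
    using assms(3) l unfolding orthogonal_set_def M_def[symmetric] by (simp add: expo_prod)
  have N1: "real_of_int (3 * q1) > 1" and N2: "real_of_int (3 * q2) > 1" using q by auto
  show "fst l \<noteq> fst l' \<and> snd l \<noteq> snd l'"
  proof
    show "fst l \<noteq> fst l'"
    proof
      assume e: "fst l = fst l'"
      have "(\<integral>x. ex (snd l - snd l') (snd x) \<partial>M) \<noteq> 0"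
        by (rule fourier_axis[OF q SA _ _ _ N2]) (auto simp: phi_def sierpD_def fst_meas snd_meas)
      moreover have "(\<lambda>x. ex 1 ((fst l - fst l') * fst x + (snd l - snd l') * snd x)) = (\<lambda>x. ex (snd l - snd l') (snd x))"
        using e by (simp add: ex_def mult.assoc)
      ultimately show False using orth by simp
    qed
    show "snd l \<noteq> snd l'"
    proof
      assume e: "snd l = snd l'"
      have "(\<integral>x. ex (fst l - fst l') (fst x) \<partial>M) \<noteq> 0"
        by (rule fourier_axis[OF q SA _ _ _ N1]) (auto simp: phi_def sierpD_def fst_meas snd_meas)
      moreover have "(\<lambda>x. ex 1 ((fst l - fst l') * fst x + (snd l - snd l') * snd x)) = (\<lambda>x. ex (fst l - fst l') (fst x))"
        using e by (simp add: ex_def mult.assoc)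
      ultimately show False using orth by simp
    qed
  qed
qed

end
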